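(* Let $d\ge2$, $\delta\in[0,1/d]$, and let $N$ be a $\delta$-upper bounded matrix of dimension $d\times d$. Then $$\inf_{x\in\mathbb{R}^d,\ \|x\|_\infty=1}\|N x\|_\infty\ \ge\ \frac{1-d\delta}{d-1}.$$
   Context: A $d\times d$ matrix $N$ is $\delta$-upper bounded if it is stochastic (non-negative entries, rows summing to $1$), $N_{i,i}\ge1-(d-1)\delta$ for all $i$, and $N_{i,j}\le\delta$ for all $i\ne j$. Here $\|\cdot\|_\infty$ is the maximum norm on $\mathbb{R}^d$. *)

theory Defs
  imports "HOL-Analysis.Analysis"
begin

definition stochastic :: "real^'n^'n \<Rightarrow> bool" where
  "stochastic N \<longleftrightarrow> (\<forall>i j. N $ i $ j \<ge> 0) \<and> (\<forall>i. (\<Sum>j\<in>UNIV. N $ i $ j) = 1)"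

definition delta_upper_bounded :: "real \<Rightarrow> real^'n^'n \<Rightarrow> bool" where
  "delta_upper_bounded \<delta> N \<longleftrightarrow> stochastic N
     \<and> (\<forall>i. N $ i $ i \<ge> 1 - (real CARD('n) - 1) * \<delta>)
     \<and> (\<forall>i j. i \<noteq> j \<longrightarrow> N $ i $ j \<le> \<delta>)"

end

theory Submission
  imports Defs
begin

lemma exists_max_comp:
  fixes x :: "real^'n"
  shows "\<exists>i. \<bar>x$i\<bar> = infnorm x"
proof -
  have f: "finite {\<bar>x$i\<bar> |i. i\<in>UNIV}" by (simp add: full_SetCompr_eq)
  have ne: "{\<bar>x$i\<bar> |i. i\<in>UNIV} \<noteq> {}" by auto
  have "infnorm x = Max {\<bar>x$i\<bar> |i. i\<in>UNIV}"
    unfolding infnorm_cart using cSup_eq_Max[OF f ne] by simp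
  moreover have "Max {\<bar>x$i\<bar> |i. i\<in>UNIV} \<in> {\<bar>x$i\<bar> |i. i\<in>UNIV}"
    using Max_in[OF f ne] .
  ultimately show ?thesis by auto
qed

lemma key:
  fixes N :: "real^'n^'n" and \<delta> :: real and x :: "real^'n"
  assumes d2: "CARD('n) \<ge> 2"
    and dpos: "0 \<le> \<delta>" and dle: "\<delta> \<le> 1 / real CARD('n)"
    and ub: "delta_upper_bounded \<delta> N"
    and xi: "x$i = 1" and xb: "\<And>j. \<bar>x$j\<bar> \<le> 1"
  shows "infnorm (N *v x) \<ge> (1 - real CARD('n) * \<delta>) / (real CARD('n) - 1)"
proof -
  define D where "D = real CARD('n)"
  define s where "s = (\<Sum>j\<in>UNIV. x$j)"
  define I where "I = infnorm (N *v x)"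
  have nn: "\<And>i j. N$i$j \<ge> 0" and rs: "\<And>i. (\<Sum>j\<in>UNIV. N$i$j) = 1"
    and off: "\<And>i j. i \<noteq> j \<Longrightarrow> N$i$j \<le> \<delta>"
    using ub unfolding delta_upper_bounded_def stochastic_def by auto
  obtain k where k: "\<And>j. x$k \<le> x$j"
  proof -
    have "finite (range (\<lambda>j. x$j))" by simp
    then have "Min (range (\<lambda>j. x$j)) \<in> range (\<lambda>j. x$j)" by (intro Min_in) auto
    then obtain k where "Min (range (\<lambda>j. x$j)) = x$k" by blast
    then have "\<And>j. x$k \<le> x$j" by (metis Min_le UNIV_I \<open>finite (range (\<lambda>j. x$j))\<close> image_eqI)
    then show ?thesis using that by blast
  qed
  define m where "m = x$k"
  have mge: "m \<ge> -1" using xb[of k] unfolding m_def by simp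
  have comp: "\<And>r. (N *v x)$r = (\<Sum>j\<in>UNIV. N$r$j * x$j)"
    by (simp add: matrix_vector_mult_def)
  have A: "(N *v x)$i \<ge> 1 - \<delta> * (D - s)"
  proof -
    have e1: "(N *v x)$i = (\<Sum>j\<in>UNIV. N$i$j) - (\<Sum>j\<in>UNIV. N$i$j * (1 - x$j))"
      by (simp add: comp algebra_simps sum_subtractf)
    have "(\<Sum>j\<in>UNIV. N$i$j * (1 - x$j)) \<le> (\<Sum>j\<in>UNIV. \<delta> * (1 - x$j))"
    proof (rule sum_mono)
      fix j :: 'n
      have "1 - x$j \<ge> 0" using xb[of j] by simp
      show "N$i$j * (1 - x$j) \<le> \<delta> * (1 - x$j)"
      proof (cases "j = i")
        case True then show ?thesis using xi by simp
      next
        case False then show ?thesis using off[of i j] \<open>1 - x$j \<ge> 0\<close>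
          by (simp add: mult_right_mono)
      qed
    qed
    also have "(\<Sum>j\<in>UNIV. \<delta> * (1 - x$j)) = \<delta> * (D - s)"
      by (simp add: sum_distrib_left[symmetric] sum_subtractf D_def s_def)
    finally show ?thesis using rs[of i] e1 by simp
  qed
  have B: "(N *v x)$k \<le> m + \<delta> * (s - D * m)"
  proof -
    have e2: "(N *v x)$k = m * (\<Sum>j\<in>UNIV. N$k$j) + (\<Sum>j\<in>UNIV. N$k$j * (x$j - m))"
      by (simp add: comp algebra_simps sum.distrib sum_distrib_left sum_subtractf)
    have "(\<Sum>j\<in>UNIV. N$k$j * (x$j - m)) \<le> (\<Sum>j\<in>UNIV. \<delta> * (x$j - m))"
    proof (rule sum_mono)
      fix j :: 'n
      have "x$j - m \<ge> 0" using k[of j] unfolding m_def by simp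
      show "N$k$j * (x$j - m) \<le> \<delta> * (x$j - m)"
      proof (cases "j = k")
        case True then show ?thesis unfolding m_def by simp
      next
        case False then show ?thesis using off[of k j] \<open>x$j - m \<ge> 0\<close>
          by (simp add: mult_right_mono)
      qed
    qed
    also have "(\<Sum>j\<in>UNIV. \<delta> * (x$j - m)) = \<delta> * (s - D * m)"
      by (simp add: sum_distrib_left[symmetric] sum_subtractf D_def s_def)
    finally show ?thesis using rs[of k] e2 by simp
  qed
  have sge: "s \<ge> 1 + (D - 1) * m"
  proof -
    have "(\<Sum>j\<in>UNIV. x$j - m) \<ge> x$i - m"
      using member_le_sum[of i UNIV "\<lambda>j. x$j - m"] k unfolding m_def by auto
    then show ?thesis by (simp add: sum_subtractf s_def D_def xi algebra_simps)
  qed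
  have IA: "I \<ge> 1 - \<delta> * (D - s)"
    using A component_le_infnorm_cart[of "N *v x" i] unfolding I_def by linarith
  have IB: "I \<ge> - (m + \<delta> * (s - D * m))"
    using B component_le_infnorm_cart[of "N *v x" k] unfolding I_def by linarith
  have D2: "D \<ge> 2" using d2 unfolding D_def by simp
  have dD: "D * \<delta> \<le> 1" using dle D2 by (simp add: D_def field_simps)
  have goal: "I \<ge> (1 - D * \<delta>) / (D - 1)"
  proof (cases "m \<ge> 0")
    case True
    have "\<delta> * s \<ge> \<delta> * 1" using sge True D2 dpos
      by (intro mult_left_mono) (auto intro: order_trans[OF _ sge] simp: mult_nonneg_nonneg)
    then have I1: "I \<ge> 1 - (D - 1) * \<delta>" using IA by (simp add: algebra_simps)
    have "(1 - D * \<delta>) \<le> (D - 1) * (1 - (D - 1) * \<delta>)"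
    proof -
      have "(D - 1) * (1 - (D - 1) * \<delta>) - (1 - D * \<delta>) = (D - 2) * (1 - D*\<delta>) + \<delta> * (D - 1)"
        by (simp add: algebra_simps)
      moreover have "(D - 2) * (1 - D*\<delta>) \<ge> 0" using D2 dD by simp
      moreover have "\<delta> * (D - 1) \<ge> 0" using D2 dpos by simp
      ultimately show ?thesis by linarith
    qed
    then have "(1 - D * \<delta>) / (D - 1) \<le> 1 - (D - 1) * \<delta>" using D2
      by (simp add: divide_le_eq mult.commute)
    then show ?thesis using I1 by linarith
  next
    case False
    have "2 * I \<ge> (1 - D * \<delta>) * (1 - m)" using IA IB by (simp add: algebra_simps)
    moreover have "(1 - D * \<delta>) * (1 - m) \<ge> (1 - D * \<delta>) * 1"
      using False dD by (intro mult_left_mono) auto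
    ultimately have I2: "2 * I \<ge> 1 - D * \<delta>" by simp
    show ?thesis
    proof (cases "D \<ge> 3")
      case True
      have "(1 - D * \<delta>) / (D - 1) \<le> (1 - D * \<delta>) / 2"
        using True dD by (intro divide_left_mono) auto
      moreover have "(1 - D * \<delta>) / 2 \<le> I" using I2 by simp
      ultimately show ?thesis by (rule order_trans)
    next
      case False
      then have "D = 2" using D2 d2 unfolding D_def by simp
      then have "s \<ge> 0" using sge mge by simp
      then have "I \<ge> 1 - D * \<delta>" using IA dpos \<open>D = 2\<close>
        by (simp add: algebra_simps) (smt (verit) mult_nonneg_nonneg)
      then show ?thesis using \<open>D = 2\<close> by simp
    qed
  qed
  then show ?thesis unfolding I_def D_def .
qed

theorem lemma13:
  fixes N :: "real^'n^'n" and \<delta> :: real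
  assumes "CARD('n) \<ge> 2"
    and "0 \<le> \<delta>" and "\<delta> \<le> 1 / real CARD('n)"
    and "delta_upper_bounded \<delta> N"
  shows "(INF x\<in>{x :: real^'n. infnorm x = 1}. infnorm (N *v x))
           \<ge> (1 - real CARD('n) * \<delta>) / (real CARD('n) - 1)"
proof (rule cINF_greatest)
  have "infnorm (\<chi> i. 1 :: real^'n) = 1"
  proof -
    obtain i where "\<bar>(\<chi> i. 1 :: real^'n)$i\<bar> = infnorm (\<chi> i. 1 :: real^'n)"
      using exists_max_comp by blast
    then show ?thesis by simp
  qed
  then show "{x :: real^'n. infnorm x = 1} \<noteq> {}" by blast
next
  fix x :: "real^'n"
  assume "x \<in> {x. infnorm x = 1}"
  then have x1: "infnorm x = 1" by simp
  obtain i where i: "\<bar>x$i\<bar> = 1" using exists_max_comp[of x] x1 by auto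
  have xb: "\<And>j. \<bar>x$j\<bar> \<le> 1" using component_le_infnorm_cart[of x] x1 by simp
  show "infnorm (N *v x) \<ge> (1 - real CARD('n) * \<delta>) / (real CARD('n) - 1)"
  proof (cases "x$i = 1")
    case True
    then show ?thesis using key[OF assms, of x i] xb by simp
  next
    case False
    then have "(-x)$i = 1" using i by simp
    moreover have "\<And>j. \<bar>(-x)$j\<bar> \<le> 1" using xb by simp
    ultimately have "infnorm (N *v (-x)) \<ge> (1 - real CARD('n) * \<delta>) / (real CARD('n) - 1)"
      using key[OF assms, of "-x" i] by simp
    moreover have "N *v (-x) = - (N *v x)" by (simp add: vec_eq_iff matrix_vector_mult_def sum_negf)
    ultimately show ?thesis by (simp add: infnorm_neg)
  qed
qed

end
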